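(* Let $\Gamma$ be a represented pointclass satisfying the standing assumptions and (uniformly computably) closed under the operation $(A_n)_{n\in\mathbb{N}}\mapsto\{01^\mathbb{N}\}\cup\bigcup_{n\in\mathbb{N}}1^n0A_n$. Then $\mathrm{FindWS}_\Gamma\equiv_W\widehat{\mathrm{FindWS}_\Gamma}$.
   Context: $f\leq_W g$ iff there are computable partial $K,H:\subseteq\mathbb{N}^\mathbb{N}\to\mathbb{N}^\mathbb{N}$ such that for every realizer $G$ of $g$, $p\mapsto K(\langle p,G(H(p))\rangle)$ realizes $f$; $\equiv_W$ induced equivalence. $\widehat{f}(x_0,x_1,\ldots)=(f(x_0),f(x_1),\ldots)$. Win/lose games: players 1,2, choices $\{0,1\}$, turn function $d:\{0,1\}^*\to\{1,2\}$ (lookup table), winning set for player 1 (complement for player 2); $wA=\{wp\mid p\in A\}$. $\mathrm{FindWS}_\Gamma$: input a win/lose game whose player-1 winning set is given by a $\Gamma$-name and in which player 1 has a winning strategy; output a strategy profile ($\{0,1\}^*\to\{0,1\}$) in which one strategy is winning (necessarily player 1's). Standing assumptions on a represented pointclass $\Gamma$ of subsets of $\{0,1\}^\mathbb{N}$: every win/lose game with player-1 winning set in $\Gamma$ is determined; $\emptyset,\{0,1\}^\mathbb{N}\in\Gamma$; $\Gamma$ is uniformly computably closed under rescaling $(w,A)\mapsto wA$ and its inverse and under intersection with clopen sets. *)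

theory Defs
  imports Main "HOL-Library.Nat_Bijection"
begin

section \<open>Partial recursive functions (unary, via Cantor pairing), as in Mathlib's Nat.Partrec\<close>

definition rfind_opt :: "(nat \<Rightarrow> nat option) \<Rightarrow> nat option" where
  "rfind_opt f =
     (let P = (\<lambda>n. f n = Some 0 \<and> (\<forall>m<n. \<exists>k. f m = Some (Suc k)))
      in if (\<exists>n. P n) then Some (LEAST n. P n) else None)"

inductive partrec :: "(nat \<Rightarrow> nat option) \<Rightarrow> bool" where
  zero: "partrec (\<lambda>_. Some 0)"
| succ: "partrec (\<lambda>n. Some (Suc n))"
| left: "partrec (\<lambda>n. Some (fst (prod_decode n)))"
| right: "partrec (\<lambda>n. Some (snd (prod_decode n)))"
| pair: "partrec f \<Longrightarrow> partrec g \<Longrightarrow>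
     partrec (\<lambda>n. Option.bind (f n) (\<lambda>a. Option.bind (g n) (\<lambda>b. Some (prod_encode (a, b)))))"
| comp: "partrec f \<Longrightarrow> partrec g \<Longrightarrow> partrec (\<lambda>n. Option.bind (g n) f)"
| prec: "partrec f \<Longrightarrow> partrec g \<Longrightarrow>
     partrec (\<lambda>p. case prod_decode p of (a, n) \<Rightarrow>
        rec_nat (f a) (\<lambda>y IH. Option.bind IH (\<lambda>i. g (prod_encode (a, prod_encode (y, i))))) n)"
| rfind: "partrec f \<Longrightarrow> partrec (\<lambda>a. rfind_opt (\<lambda>n. f (prod_encode (a, n))))"

type_synonym baire = "nat \<Rightarrow> nat"

text \<open>A partial recursive phi acts as a Type-2 machine: output digit n on input p is v iff
  for the least prefix length k at which phi(prefix, n) answers non-zero, the answer is v+1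
  (answer 0 means: read more input).\<close>
definition t2_out :: "(nat \<Rightarrow> nat option) \<Rightarrow> baire \<Rightarrow> nat \<Rightarrow> nat \<Rightarrow> bool" where
  "t2_out phi p n v \<longleftrightarrow>
     (\<exists>k. phi (prod_encode (list_encode (map p [0..<k]), n)) = Some (Suc v) \<and>
          (\<forall>j<k. phi (prod_encode (list_encode (map p [0..<j]), n)) = Some 0))"

definition t2_computes :: "(nat \<Rightarrow> nat option) \<Rightarrow> baire \<Rightarrow> baire \<Rightarrow> bool" where
  "t2_computes phi p q \<longleftrightarrow> (\<forall>n. t2_out phi p n (q n))"

definition bpair :: "baire \<Rightarrow> baire \<Rightarrow> baire" where
  "bpair p q = (\<lambda>n. if even n then p (n div 2) else q (n div 2))"

definition bfst :: "baire \<Rightarrow> baire" where "bfst r = (\<lambda>n. r (2 * n))"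
definition bsnd :: "baire \<Rightarrow> baire" where "bsnd r = (\<lambda>n. r (2 * n + 1))"

definition btuple :: "(nat \<Rightarrow> baire) \<Rightarrow> baire" where
  "btuple ps = (\<lambda>n. case prod_decode n of (i, j) \<Rightarrow> ps i j)"

definition bcomp :: "baire \<Rightarrow> nat \<Rightarrow> baire" where
  "bcomp r i = (\<lambda>j. r (prod_encode (i, j)))"

type_synonym 'x rep = "baire \<Rightarrow> 'x option"   \<comment> \<open>partial surjection onto its range\<close>
type_synonym ('x, 'y) mvf = "'x \<Rightarrow> 'y set"      \<comment> \<open>dom f = {x. f x \<noteq> {}}\<close>

definition realizer :: "'u rep \<Rightarrow> 'v rep \<Rightarrow> ('u, 'v) mvf \<Rightarrow> (baire \<Rightarrow> baire) \<Rightarrow> bool" where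
  "realizer dU dV g G \<longleftrightarrow>
     (\<forall>p u. dU p = Some u \<and> g u \<noteq> {} \<longrightarrow> (\<exists>v. dV (G p) = Some v \<and> v \<in> g u))"

text \<open>Realizers are modelled as total functions; this is harmless since the definition
  explicitly demands that H maps names of points in dom f to names of points in dom g,
  exactly where every (partial) realizer of g is defined.\<close>
definition weihrauch_le ::
  "'x rep \<Rightarrow> 'y rep \<Rightarrow> ('x, 'y) mvf \<Rightarrow> 'u rep \<Rightarrow> 'v rep \<Rightarrow> ('u, 'v) mvf \<Rightarrow> bool" where
  "weihrauch_le dX dY f dU dV g \<longleftrightarrow>
     (\<exists>phiK phiH. partrec phiK \<and> partrec phiH \<and>
        (\<forall>p x. dX p = Some x \<and> f x \<noteq> {} \<longrightarrow>
           (\<exists>h. t2_computes phiH p h \<and> (\<exists>u. dU h = Some u \<and> g u \<noteq> {}) \<and>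
              (\<forall>G. realizer dU dV g G \<longrightarrow>
                 (\<exists>k. t2_computes phiK (bpair p (G h)) k \<and>
                      (\<exists>y. dY k = Some y \<and> y \<in> f x))))))"

definition weihrauch_eq ::
  "'x rep \<Rightarrow> 'y rep \<Rightarrow> ('x, 'y) mvf \<Rightarrow> 'u rep \<Rightarrow> 'v rep \<Rightarrow> ('u, 'v) mvf \<Rightarrow> bool" where
  "weihrauch_eq dX dY f dU dV g \<longleftrightarrow>
     weihrauch_le dX dY f dU dV g \<and> weihrauch_le dU dV g dX dY f"

definition seq_rep :: "'x rep \<Rightarrow> (nat \<Rightarrow> 'x) rep" where
  "seq_rep d r = (if (\<forall>i. d (bcomp r i) \<noteq> None) then Some (\<lambda>i. the (d (bcomp r i))) else None)"

definition parallelization :: "('x, 'y) mvf \<Rightarrow> (nat \<Rightarrow> 'x, nat \<Rightarrow> 'y) mvf" where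
  "parallelization f xs = {ys. \<forall>n. ys n \<in> f (xs n)}"

text \<open>Choices 0,1 are False,True; Cantor space is nat => bool; finite words are bool lists.\<close>

fun bl_code :: "bool list \<Rightarrow> nat" where
  "bl_code [] = 0"
| "bl_code (b # w) = 2 * bl_code w + (if b then 2 else 1)"

definition prepend :: "bool list \<Rightarrow> (nat \<Rightarrow> bool) \<Rightarrow> (nat \<Rightarrow> bool)" where
  "prepend w p = (\<lambda>n. if n < length w then w ! n else p (n - length w))"

definition rescale :: "bool list \<Rightarrow> (nat \<Rightarrow> bool) set \<Rightarrow> (nat \<Rightarrow> bool) set" where
  "rescale w A = prepend w ` A"

definition unscale :: "bool list \<Rightarrow> (nat \<Rightarrow> bool) set \<Rightarrow> (nat \<Rightarrow> bool) set" where
  "unscale w A = {p. prepend w p \<in> A}"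

definition cylinder :: "bool list \<Rightarrow> (nat \<Rightarrow> bool) set" where
  "cylinder w = {p. \<forall>i<length w. p i = w ! i}"

definition clopen_of :: "bool list list \<Rightarrow> (nat \<Rightarrow> bool) set" where
  "clopen_of ws = (\<Union>w\<in>set ws. cylinder w)"

datatype player = P1 | P2

type_synonym profile = "bool list \<Rightarrow> bool"

fun hist :: "profile \<Rightarrow> nat \<Rightarrow> bool list" where
  "hist s 0 = []"
| "hist s (Suc n) = hist s n @ [s (hist s n)]"

definition play :: "profile \<Rightarrow> (nat \<Rightarrow> bool)" where
  "play s = (\<lambda>n. s (hist s n))"

text \<open>A strategy of player i is (the restriction to i's positions of) a function on words.\<close>
definition winning :: "(bool list \<Rightarrow> player) \<Rightarrow> (nat \<Rightarrow> bool) set \<Rightarrow> player \<Rightarrow> profile \<Rightarrow> bool" where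
  "winning d A i s \<longleftrightarrow>
     (\<forall>t. (\<forall>w. d w = i \<longrightarrow> t w = s w) \<longrightarrow> (play t \<in> A \<longleftrightarrow> i = P1))"

definition determined :: "(bool list \<Rightarrow> player) \<Rightarrow> (nat \<Rightarrow> bool) set \<Rightarrow> bool" where
  "determined d A \<longleftrightarrow> (\<exists>s. winning d A P1 s \<or> winning d A P2 s)"

type_synonym game = "(bool list \<Rightarrow> player) \<times> (nat \<Rightarrow> bool) set"

definition game_rep :: "(nat \<Rightarrow> bool) set rep \<Rightarrow> game rep" where
  "game_rep delta r = (case delta (bsnd r) of
      None \<Rightarrow> None
    | Some A \<Rightarrow> Some (\<lambda>w. if bfst r (bl_code w) = 0 then P1 else P2, A))"

definition profile_rep :: "profile rep" where
  "profile_rep r = Some (\<lambda>w. r (bl_code w) \<noteq> 0)"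

definition FindWS :: "(game, profile) mvf" where
  "FindWS G = (case G of (d, A) \<Rightarrow>
     if (\<exists>s. winning d A P1 s) then {s. winning d A P1 s \<or> winning d A P2 s} else {})"

definition word_name :: "bool list \<Rightarrow> baire" where "word_name w = (\<lambda>_. bl_code w)"
definition clopen_name :: "bool list list \<Rightarrow> baire" where
  "clopen_name ws = (\<lambda>_. list_encode (map bl_code ws))"

definition standing_assumptions :: "(nat \<Rightarrow> bool) set rep \<Rightarrow> bool" where
  "standing_assumptions delta \<longleftrightarrow>
     (\<forall>A\<in>ran delta. \<forall>d. determined d A) \<and>
     {} \<in> ran delta \<and> UNIV \<in> ran delta \<and>
     (\<exists>phi. partrec phi \<and> (\<forall>w r A. delta r = Some A \<longrightarrow>
        (\<exists>q. t2_computes phi (bpair (word_name w) r) q \<and> delta q = Some (rescale w A)))) \<and>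
     (\<exists>phi. partrec phi \<and> (\<forall>w r A. delta r = Some A \<longrightarrow>
        (\<exists>q. t2_computes phi (bpair (word_name w) r) q \<and> delta q = Some (unscale w A)))) \<and>
     (\<exists>phi. partrec phi \<and> (\<forall>ws r A. delta r = Some A \<longrightarrow>
        (\<exists>q. t2_computes phi (bpair (clopen_name ws) r) q \<and> delta q = Some (A \<inter> clopen_of ws))))"

definition closed_under_comb :: "(nat \<Rightarrow> bool) set rep \<Rightarrow> bool" where
  "closed_under_comb delta \<longleftrightarrow>
     (\<exists>phi. partrec phi \<and> (\<forall>rs As. (\<forall>n. delta (rs n) = Some (As n)) \<longrightarrow>
        (\<exists>q. t2_computes phi (btuple rs) q \<and>
             delta q = Some ({\<lambda>n. n \<noteq> 0} \<union>
                (\<Union>n. rescale (replicate n True @ [False]) (As n))))))"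

end

theory Submission
  imports Defs
begin


abbreviation enc where "enc a b \<equiv> prod_encode (a, b)"
abbreviation d1 where "d1 n \<equiv> fst (prod_decode n)"
abbreviation d2 where "d2 n \<equiv> snd (prod_decode n)"

lemma partrec_eq: "partrec f \<Longrightarrow> (\<And>n. f n = g n) \<Longrightarrow> partrec g"
  by (metis ext)

definition tot :: "(nat \<Rightarrow> nat) \<Rightarrow> bool" where "tot f \<longleftrightarrow> partrec (\<lambda>n. Some (f n))"

lemma tot_const: "tot (\<lambda>_. c)"
  unfolding tot_def
proof (induction c)
  case 0 show ?case by (rule partrec.zero)
next
  case (Suc c)
  from partrec.comp[OF partrec.succ Suc] show ?case by simp
qed

lemma tot_id: "tot (\<lambda>n. n)"
  unfolding tot_def using partrec.pair[OF partrec.left partrec.right] by simp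

lemma tot_id': "tot id" using tot_id by (simp add: id_def)
lemma tot_d1: "tot d1" unfolding tot_def by (rule partrec.left)
lemma tot_d2: "tot d2" unfolding tot_def by (rule partrec.right)
lemma tot_Suc: "tot Suc" unfolding tot_def by (rule partrec.succ)

lemma tot_comp: "tot f \<Longrightarrow> tot g \<Longrightarrow> tot (\<lambda>n. f (g n))"
  unfolding tot_def using partrec.comp[of "\<lambda>n. Some (f n)" "\<lambda>n. Some (g n)"] by simp

lemma tot_pair: "tot f \<Longrightarrow> tot g \<Longrightarrow> tot (\<lambda>n. enc (f n) (g n))"
  unfolding tot_def using partrec.pair[of "\<lambda>n. Some (f n)" "\<lambda>n. Some (g n)"] by simp

lemma tot_eq: "tot f \<Longrightarrow> (\<And>n. f n = g n) \<Longrightarrow> tot g"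
  by (metis ext)

lemma tot_rec:
  assumes "tot f" "tot g"
  shows "tot (\<lambda>p. rec_nat (f (d1 p)) (\<lambda>y i. g (enc (d1 p) (enc y i))) (d2 p))"
proof -
  have "partrec (\<lambda>p. case prod_decode p of (a, n) \<Rightarrow>
        rec_nat (Some (f a)) (\<lambda>y IH. Option.bind IH (\<lambda>i. Some (g (enc a (enc y i))))) n)"
    using partrec.prec[OF assms[unfolded tot_def]] .
  moreover have "rec_nat (Some (f a)) (\<lambda>y IH. Option.bind IH (\<lambda>i. Some (g (enc a (enc y i))))) n
      = Some (rec_nat (f a) (\<lambda>y i. g (enc a (enc y i))) n)" for a n
    by (induction n) auto
  ultimately show ?thesis unfolding tot_def
    by (metis (no_types, lifting) ext case_prod_beta)
qed

lemma tot2: "tot (\<lambda>n. f (d1 n) (d2 n)) \<Longrightarrow> tot a \<Longrightarrow> tot b \<Longrightarrow> tot (\<lambda>n. f (a n) (b n))"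
  using tot_comp[of "\<lambda>n. f (d1 n) (d2 n)" "\<lambda>n. enc (a n) (b n)"] tot_pair by simp

lemma tot_rec2:
  assumes "tot f" "tot (\<lambda>n. g (d1 n) (d1 (d2 n)) (d2 (d2 n)))" "tot a" "tot b"
  shows "tot (\<lambda>n. rec_nat (f (a n)) (\<lambda>y i. g (a n) y i) (b n))"
proof -
  have "tot (\<lambda>p. rec_nat (f (d1 p)) (\<lambda>y i. g (d1 p) y i) (d2 p))"
    using tot_rec[OF assms(1,2)] by simp
  from tot2[of "\<lambda>x y. rec_nat (f x) (\<lambda>y' i. g x y' i) y", OF this assms(3,4)] show ?thesis .
qed

lemma tot_add: "tot (\<lambda>n. a n + b n)" if "tot a" "tot b"
proof -
  have "tot (\<lambda>n. rec_nat (id (a n)) (\<lambda>y i. (\<lambda>x y i. Suc i) (a n) y i) (b n))"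
    by (rule tot_rec2; intro that tot_id' tot_comp[OF tot_Suc] tot_comp[OF tot_d2 tot_d2] tot_id)
  moreover have "rec_nat x (\<lambda>y i. Suc i) m = x + m" for x m by (induction m) auto
  ultimately show ?thesis by (simp add: id_def)
qed

lemma tot_d1': "tot a \<Longrightarrow> tot (\<lambda>n. d1 (a n))" using tot_comp[OF tot_d1] .
lemma tot_d2': "tot a \<Longrightarrow> tot (\<lambda>n. d2 (a n))" using tot_comp[OF tot_d2] .
lemma tot_Suc': "tot a \<Longrightarrow> tot (\<lambda>n. Suc (a n))" using tot_comp[OF tot_Suc] .

lemma tot_mult: "tot (\<lambda>n. a n * b n)" if "tot a" "tot b"
proof -
  have "tot (\<lambda>n. rec_nat ((\<lambda>_. 0) (a n)) (\<lambda>y i. (\<lambda>x y i. i + x) (a n) y i) (b n))"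
    by (rule tot_rec2; intro that tot_add tot_d2' tot_d1' tot_id tot_const)
  moreover have "rec_nat 0 (\<lambda>y i. i + x) m = x * m" for x m by (induction m) auto
  ultimately show ?thesis by (simp add: mult.commute)
qed

lemma tot_pred: "tot (\<lambda>n. a n - 1)" if "tot a"
proof -
  have "tot (\<lambda>n. rec_nat ((\<lambda>_. 0) (a n)) (\<lambda>y i. (\<lambda>x y i. y) (a n) y i) (a n))"
    by (rule tot_rec2; intro that tot_add tot_d2' tot_d1' tot_id tot_const)
  moreover have "rec_nat 0 (\<lambda>y i. y) m = m - 1" for m by (induction m) auto
  ultimately show ?thesis by simp
qed

lemma tot_sub: "tot (\<lambda>n. a n - b n)" if "tot a" "tot b"
proof -
  have "tot (\<lambda>n. rec_nat (id (a n)) (\<lambda>y i. (\<lambda>x y i. i - 1) (a n) y i) (b n))"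
    by (rule tot_rec2; intro that tot_id' tot_pred tot_d2' tot_d1' tot_id tot_const)
  moreover have "rec_nat x (\<lambda>y i. i - 1) m = x - m" for x m by (induction m) auto
  ultimately show ?thesis by (simp add: id_def)
qed

lemma tot_if0: "tot (\<lambda>n. if c n = 0 then x n else y n)" if "tot c" "tot x" "tot y"
proof -
  have "tot (\<lambda>n. x n * (1 - c n) + y n * (1 - (1 - c n)))"
    by (intro tot_add tot_mult tot_sub that tot_const)
  moreover have "x n * (1 - c n) + y n * (1 - (1 - c n)) = (if c n = 0 then x n else y n)" for n
    by (cases "c n") auto
  ultimately show ?thesis by simp
qed

lemma tot_if_eq: "tot (\<lambda>n. if a n = b n then x n else y n)" if "tot a" "tot b" "tot x" "tot y"
proof -
  have "tot (\<lambda>n. if (a n - b n) + (b n - a n) = 0 then x n else y n)"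
    by (intro tot_if0 tot_add tot_sub that)
  moreover have "((a n - b n) + (b n - a n) = 0) = (a n = b n)" for n by auto
  ultimately show ?thesis by simp
qed

lemma tot_if_le: "tot (\<lambda>n. if a n \<le> b n then x n else y n)" if "tot a" "tot b" "tot x" "tot y"
proof -
  have "tot (\<lambda>n. if (a n - b n) = 0 then x n else y n)"
    by (intro tot_if0 tot_add tot_sub that)
  moreover have "((a n - b n) = 0) = (a n \<le> b n)" for n by auto
  ultimately show ?thesis by simp
qed

lemma tot_if_less: "tot (\<lambda>n. if a n < b n then x n else y n)" if "tot a" "tot b" "tot x" "tot y"
proof -
  have "tot (\<lambda>n. if Suc (a n) \<le> b n then x n else y n)"
    by (intro tot_if_le tot_Suc' that)
  then show ?thesis by (simp add: Suc_le_eq)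
qed

lemma tot_funpow: "tot (\<lambda>n. (f ^^ b n) (a n))" if "tot f" "tot a" "tot b"
proof -
  have "tot (\<lambda>n. rec_nat (id (a n)) (\<lambda>y i. (\<lambda>x y i. f i) (a n) y i) (b n))"
    by (rule tot_rec2; intro that tot_id' tot_comp[OF that(1)] tot_d2' tot_d1' tot_id tot_const)
  moreover have "rec_nat x (\<lambda>y i. f i) m = (f ^^ m) x" for x m by (induction m) auto
  ultimately show ?thesis by (simp add: id_def)
qed

lemma tot_div2: "tot (\<lambda>n. a n div 2)" and tot_mod2: "tot (\<lambda>n. a n mod 2)" if "tot a"
proof -
  define st where "st = (\<lambda>s::nat. if d2 s = 1 then enc (Suc (d1 s)) 0 else enc (d1 s) 1)"
  have tst: "tot st" unfolding st_def
    by (intro tot_if_eq tot_pair tot_Suc' tot_d1' tot_d2' tot_id tot_const)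
  have key: "(st ^^ m) 0 = enc (m div 2) (m mod 2)" for m
  proof (induction m)
    case 0 then show ?case by (simp add: prod_encode_def)
  next
    case (Suc m)
    have e: "st (enc a b) = (if b = 1 then enc (Suc a) 0 else enc a 1)" for a b by (simp add: st_def)
    have "(st ^^ Suc m) 0 = st (enc (m div 2) (m mod 2))" using Suc by simp
    also have "\<dots> = enc (Suc m div 2) (Suc m mod 2)"
      unfolding e by (cases "m mod 2 = 1") (simp_all, presburger+)
    finally show ?case .
  qed
  have "tot (\<lambda>n. (st ^^ a n) 0)" by (intro tot_funpow tst that tot_const)
  then have t: "tot (\<lambda>n. enc (a n div 2) (a n mod 2))" by (simp add: key)
  show "tot (\<lambda>n. a n div 2)" using tot_d1'[OF t] by simp
  show "tot (\<lambda>n. a n mod 2)" using tot_d2'[OF t] by simp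
qed

lemma tot_triangle: "tot (\<lambda>n. triangle (a n))" if "tot a"
proof -
  have "tot (\<lambda>n. rec_nat ((\<lambda>_. 0) (a n)) (\<lambda>y i. (\<lambda>x y i. i + Suc y) (a n) y i) (a n))"
    by (rule tot_rec2; intro that tot_add tot_Suc' tot_d2' tot_d1' tot_id tot_const)
  moreover have "rec_nat 0 (\<lambda>y i. i + Suc y) m = triangle m" for m by (induction m) auto
  ultimately show ?thesis by simp
qed

section \<open>lists\<close>

definition tlc :: "nat \<Rightarrow> nat" where "tlc l = d2 (l - 1)"
definition hdc :: "nat \<Rightarrow> nat" where "hdc l = d1 (l - 1)"
definition nthc :: "nat \<Rightarrow> nat \<Rightarrow> nat" where "nthc l j = hdc ((tlc ^^ j) l)"

lemma tot_tlc: "tot a \<Longrightarrow> tot (\<lambda>n. tlc (a n))" unfolding tlc_def by (intro tot_d2' tot_pred)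
lemma tot_hdc: "tot a \<Longrightarrow> tot (\<lambda>n. hdc (a n))" unfolding hdc_def by (intro tot_d1' tot_pred)
lemma tot_tlcs: "tot a \<Longrightarrow> tot b \<Longrightarrow> tot (\<lambda>n. (tlc ^^ b n) (a n))"
  by (intro tot_funpow tot_tlc tot_id)
lemma tot_nthc: "tot a \<Longrightarrow> tot b \<Longrightarrow> tot (\<lambda>n. nthc (a n) (b n))"
  unfolding nthc_def by (intro tot_hdc tot_tlcs)

lemma tlc_le: "tlc (list_encode xs) = list_encode (tl xs)"
proof -
  have "prod_decode 0 = (0,0)" by (simp add: prod_decode_def prod_decode_aux.simps)
  then show ?thesis by (cases xs) (auto simp: tlc_def)
qed
lemma tlcs_le: "(tlc ^^ j) (list_encode xs) = list_encode (drop j xs)"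
  by (induction j) (auto simp: tlc_le tl_drop drop_Suc)
lemma le_zero_iff: "list_encode xs = 0 \<longleftrightarrow> xs = []"
  by (cases xs) auto
lemma avail_le: "(tlc ^^ j) (list_encode xs) \<noteq> 0 \<longleftrightarrow> j < length xs"
  by (simp add: tlcs_le le_zero_iff not_le)
lemma nthc_le: "j < length xs \<Longrightarrow> nthc (list_encode xs) j = xs ! j"
  unfolding nthc_def tlcs_le by (cases "drop j xs") (auto simp: hdc_def Cons_nth_drop_Suc[symmetric])

lemma tot_build:
  assumes "tot (\<lambda>m. F (d1 m) (d2 m))" "tot a" "tot b"
  shows "tot (\<lambda>n. list_encode (map (F (a n)) [0..<b n]))"
proof -
  define G where "G = (\<lambda>x y s. Suc (enc (F (d1 x) (d2 x - Suc y)) s))"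
  have "tot (\<lambda>n. rec_nat ((\<lambda>_. 0) (enc (a n) (b n))) (\<lambda>y i. G (enc (a n) (b n)) y i) (b n))"
    apply (rule tot_rec2)
       apply (rule tot_const)
    unfolding G_def
      apply (intro tot_Suc' tot_pair tot2[OF assms(1)] tot_d1' tot_d2' tot_sub tot_id)
     apply (intro tot_pair assms)
    apply (rule assms)
    done
  moreover have "y \<le> k \<Longrightarrow> rec_nat 0 (\<lambda>y i. G (enc x k) y i) y = list_encode (map (F x) [k - y..<k])" for x k y
  proof (induction y)
    case 0 then show ?case by simp
  next
    case (Suc y)
    then have "[k - Suc y..<k] = (k - Suc y) # [k - y..<k]"
      using upt_conv_Cons[of "k - Suc y" k] Suc.prems by (simp add: Suc_diff_Suc)
    with Suc show ?case by (simp add: G_def)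
  qed
  ultimately show ?thesis by simp
qed

section \<open>partial combinators\<close>

lemma pr_tot: "tot f \<Longrightarrow> partrec (\<lambda>n. Some (f n))" by (simp add: tot_def)

lemma pr_comp_tot: "partrec P \<Longrightarrow> tot h \<Longrightarrow> partrec (\<lambda>n. P (h n))"
  unfolding tot_def using partrec.comp[of P "\<lambda>n. Some (h n)"] by simp

lemma pr_bind: "partrec P \<Longrightarrow> partrec F \<Longrightarrow> partrec (\<lambda>n. Option.bind (P n) (\<lambda>r. F (enc n r)))"
proof -
  assume P: "partrec P" and F: "partrec F"
  have "partrec (\<lambda>n. Option.bind (Some n) (\<lambda>a. Option.bind (P n) (\<lambda>b. Some (enc a b))))"
    using partrec.pair[OF tot_id[unfolded tot_def] P] .
  from partrec.comp[OF F this] show ?thesis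
    by (rule partrec_eq) (simp add: bind_assoc)
qed

lemma pr_map: "tot f \<Longrightarrow> partrec P \<Longrightarrow> partrec (\<lambda>n. map_option f (P n))"
proof -
  assume f: "tot f" and P: "partrec P"
  from partrec.comp[OF f[unfolded tot_def] P] show ?thesis
    by (rule partrec_eq) (simp add: map_conv_bind_option comp_def)
qed

lemma pr_guard: "tot c \<Longrightarrow> partrec B \<Longrightarrow> partrec (\<lambda>n. if c n = 0 then Some 0 else B n)"
proof -
  assume c: "tot c" and B: "partrec B"
  have "partrec (\<lambda>n. B (d1 n))" by (rule pr_comp_tot[OF B tot_d1])
  from partrec.prec[OF tot_const[unfolded tot_def] this]
  have Q: "partrec (\<lambda>p. case prod_decode p of (a, n) \<Rightarrow>
        rec_nat (Some 0) (\<lambda>y IH. Option.bind IH (\<lambda>i. B a)) n)" by simp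
  have h: "tot (\<lambda>n. enc n (if c n = 0 then 0 else 1))"
    by (intro tot_pair tot_id tot_if0 c tot_const)
  from pr_comp_tot[OF Q h] show ?thesis
    by (rule partrec_eq) auto
qed

lemma pr_if: "tot c \<Longrightarrow> partrec A \<Longrightarrow> partrec B \<Longrightarrow> partrec (\<lambda>n. if c n = 0 then A n else B n)"
proof -
  assume c: "tot c" and A: "partrec A" and B: "partrec B"
  have A': "partrec (\<lambda>n. if (if c n = 0 then 1 else 0::nat) = 0 then Some 0 else map_option Suc (A n))"
    apply (rule pr_guard)
     apply (rule tot_if0[OF c tot_const tot_const])
    apply (rule pr_map[OF tot_Suc A])
    done
  have B': "partrec (\<lambda>n. if c n = 0 then Some 0 else map_option Suc (B n))"
    by (intro pr_guard pr_map tot_Suc c B)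
  have "partrec (\<lambda>n. map_option (\<lambda>m. d1 m + d2 m - 1)
     (Option.bind (if (if c n = 0 then 1 else 0::nat) = 0 then Some 0 else map_option Suc (A n))
       (\<lambda>a. Option.bind (if c n = 0 then Some 0 else map_option Suc (B n)) (\<lambda>b. Some (enc a b)))))"
    by (intro pr_map partrec.pair A' B' tot_pred tot_add tot_d1 tot_d2)
  then show ?thesis
  proof (rule partrec_eq)
    fix n show "map_option (\<lambda>m. d1 m + d2 m - 1)
     (Option.bind (if (if c n = 0 then 1 else 0::nat) = 0 then Some 0 else map_option Suc (A n))
       (\<lambda>a. Option.bind (if c n = 0 then Some 0 else map_option Suc (B n)) (\<lambda>b. Some (enc a b))))
      = (if c n = 0 then A n else B n)"
      by (cases "c n = 0"; cases "A n"; cases "B n"; simp)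
  qed
qed

lemma pr_rfind: "partrec f \<Longrightarrow> partrec (\<lambda>a. rfind_opt (\<lambda>k. f (enc a k)))"
  by (rule partrec.rfind)

lemma rfind_optI:
  assumes "\<And>m. m < n \<Longrightarrow> \<exists>k. f m = Some (Suc k)" "f n = Some 0"
  shows "rfind_opt f = Some n"
proof -
  let ?P = "\<lambda>n. f n = Some 0 \<and> (\<forall>m<n. \<exists>k. f m = Some (Suc k))"
  have Pn: "?P n" using assms by auto
  have "(LEAST n. ?P n) = n"
  proof (rule Least_equality)
    show "?P n" by (rule Pn)
    fix y assume "?P y"
    show "n \<le> y"
    proof (rule ccontr)
      assume "\<not> n \<le> y"
      then have "y < n" by simp
      with assms(1) \<open>?P y\<close> show False by fastforce
    qed
  qed
  with Pn show ?thesis unfolding rfind_opt_def Let_def by auto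
qed

lemma pr_build:
  assumes D: "partrec D"
  shows "\<exists>B. partrec B \<and> (\<forall>x k v. (\<forall>j<k. D (enc x j) = Some (v j)) \<longrightarrow>
            B (enc x k) = Some (list_encode (map v [0..<k])))"
proof -
  define t where "t = (\<lambda>z. enc (d1 (d1 z)) (d2 (d1 z) - Suc (d1 (d2 z))))"
  have tt: "tot t" unfolding t_def by (intro tot_pair tot_d1' tot_d2' tot_sub tot_Suc' tot_id)
  define g where "g = (\<lambda>z. Option.bind (D (t z)) (\<lambda>r. Some (Suc (enc (d2 (enc z r)) (d2 (d2 (d1 (enc z r))))))))"
  have pg: "partrec g" unfolding g_def
    by (intro pr_bind pr_comp_tot[OF D tt] pr_tot tot_Suc' tot_pair tot_d1' tot_d2' tot_id)
  from partrec.prec[OF tot_const[unfolded tot_def] pg]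
  have Q: "partrec (\<lambda>p. case prod_decode p of (a, n) \<Rightarrow>
        rec_nat (Some 0) (\<lambda>y IH. Option.bind IH (\<lambda>i. g (enc a (enc y i)))) n)" by simp
  have h: "tot (\<lambda>m. enc m (d2 m))" by (intro tot_pair tot_id tot_d2)
  define B where "B = (\<lambda>m. case prod_decode (enc m (d2 m)) of (a, n) \<Rightarrow>
        rec_nat (Some 0) (\<lambda>y IH. Option.bind IH (\<lambda>i. g (enc a (enc y i)))) n)"
  have pB: "partrec B" using pr_comp_tot[OF Q h] unfolding B_def .
  have main: "(\<forall>j<k. D (enc x j) = Some (v j)) \<Longrightarrow> y \<le> k \<Longrightarrow>
     rec_nat (Some 0) (\<lambda>y IH. Option.bind IH (\<lambda>i. g (enc (enc x k) (enc y i)))) y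
       = Some (list_encode (map v [k - y..<k]))" for x k v y
  proof (induction y)
    case 0 then show ?case by simp
  next
    case (Suc y)
    then have u: "[k - Suc y..<k] = (k - Suc y) # [k - y..<k]"
      using upt_conv_Cons[of "k - Suc y" k] by (simp add: Suc_diff_Suc)
    have "D (enc x (k - Suc y)) = Some (v (k - Suc y))" using Suc.prems by auto
    with Suc show ?case by (simp add: u g_def t_def)
  qed
  have "B (enc x k) = Some (list_encode (map v [0..<k]))" if "\<forall>j<k. D (enc x j) = Some (v j)" for x k v
    using main[OF that order_refl] by (simp add: B_def)
  with pB show ?thesis by blast
qed



lemma t2_out_unique:
  assumes "t2_out phi p n v" "t2_out phi p n v'" shows "v = v'"
proof -
  obtain k where k: "phi (enc (list_encode (map p [0..<k])) n) = Some (Suc v)"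
      "\<forall>j<k. phi (enc (list_encode (map p [0..<j])) n) = Some 0"
    using assms(1) unfolding t2_out_def by blast
  obtain k' where k': "phi (enc (list_encode (map p [0..<k'])) n) = Some (Suc v')"
      "\<forall>j<k'. phi (enc (list_encode (map p [0..<j])) n) = Some 0"
    using assms(2) unfolding t2_out_def by blast
  have "k = k" ..
  consider "k < k'" | "k' < k" | "k = k'" by linarith
  then show ?thesis
  proof cases
    case 1 with k k' show ?thesis by auto
  next
    case 2 with k k' show ?thesis by auto
  next
    case 3 with k k' show ?thesis by auto
  qed
qed

lemma t2_computes_unique: "t2_computes phi p q \<Longrightarrow> t2_computes phi p q' \<Longrightarrow> q = q'"
  unfolding t2_computes_def using t2_out_unique by blast

lemma length_le: "length (map p [0..<k]) = k" by simp

lemma digit_machine: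
  assumes s: "tot \<sigma>" and F: "tot F"
  shows "\<exists>M. partrec M \<and> (\<forall>p. t2_computes M p (\<lambda>n. F (enc n (p (\<sigma> n)))))"
proof -
  define M' where "M' = (\<lambda>x. if (tlc ^^ \<sigma> (d2 x)) (d1 x) = 0 then 0
       else Suc (F (enc (d2 x) (nthc (d1 x) (\<sigma> (d2 x))))))"
  have "tot M'" unfolding M'_def
    by (intro tot_if0 tot_tlcs tot_Suc' tot_comp[OF F] tot_pair tot_nthc tot_comp[OF s] tot_d1 tot_d2 tot_const)
  then have pM: "partrec (\<lambda>x. Some (M' x))" by (rule pr_tot)
  have "t2_out (\<lambda>x. Some (M' x)) p n (F (enc n (p (\<sigma> n))))" for p n
    unfolding t2_out_def
  proof (intro exI conjI allI impI)
    show "Some (M' (enc (list_encode (map p [0..<Suc (\<sigma> n)])) n)) = Some (Suc (F (enc n (p (\<sigma> n)))))"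
      unfolding M'_def using avail_le[of "\<sigma> n" "map p [0..<Suc (\<sigma> n)]"]
        nthc_le[of "\<sigma> n" "map p [0..<Suc (\<sigma> n)]"]
      by (simp del: upt_Suc)
    fix j assume "j < Suc (\<sigma> n)"
    then show "Some (M' (enc (list_encode (map p [0..<j])) n)) = Some 0"
      unfolding M'_def using avail_le[of "\<sigma> n" "map p [0..<j]"] by simp
  qed
  with pM show ?thesis unfolding t2_computes_def by blast
qed

lemma bpair_machine:
  assumes "partrec Ma" "partrec Mb"
  shows "\<exists>M. partrec M \<and> (\<forall>p qa qb. t2_computes Ma p qa \<longrightarrow> t2_computes Mb p qb \<longrightarrow>
            t2_computes M p (bpair qa qb))"
proof -
  define M where "M = (\<lambda>x. if d2 x mod 2 = 0 then Ma (enc (d1 x) (d2 x div 2)) else Mb (enc (d1 x) (d2 x div 2)))"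
  have pM: "partrec M" unfolding M_def
    by (intro pr_if tot_mod2 tot_d2 pr_comp_tot[OF assms(1)] pr_comp_tot[OF assms(2)] tot_pair tot_d1 tot_div2)
  have "t2_computes M p (bpair qa qb)" if "t2_computes Ma p qa" "t2_computes Mb p qb" for p qa qb
    unfolding t2_computes_def
  proof
    fix n
    show "t2_out M p n (bpair qa qb n)"
    proof (cases "even n")
      case True
      with that(1) have "t2_out Ma p (n div 2) (qa (n div 2))" unfolding t2_computes_def by blast
      with True show ?thesis unfolding t2_out_def M_def bpair_def by simp
    next
      case False
      with that(2) have "t2_out Mb p (n div 2) (qb (n div 2))" unfolding t2_computes_def by blast
      have "n mod 2 \<noteq> 0" using False by presburger
      with False \<open>t2_out Mb p (n div 2) (qb (n div 2))\<close> show ?thesis unfolding t2_out_def M_def bpair_def by simp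
    qed
  qed
  with pM show ?thesis by blast
qed



definition win :: "nat \<Rightarrow> nat \<Rightarrow> nat" where
  "win L k = (if k = 0 then 1 else (tlc ^^ (k - 1)) L)"

lemma tot_win: "tot a \<Longrightarrow> tot b \<Longrightarrow> tot (\<lambda>n. win (a n) (b n))"
  unfolding win_def by (intro tot_if0 tot_const tot_tlcs tot_pred)

lemma win_le: "win (list_encode xs) k \<noteq> 0 \<longleftrightarrow> k \<le> length xs"
  unfolding win_def using avail_le[of "k - 1" xs] by auto

lemma win_le': "0 < win (list_encode xs) k \<longleftrightarrow> k \<le> length xs"
  using win_le by auto
lemma win_le0: "win (list_encode xs) k = 0 \<longleftrightarrow> \<not> k \<le> length xs"
  using win_le[of xs k] by auto

definition pre :: "nat \<Rightarrow> nat \<Rightarrow> nat" where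
  "pre L k = list_encode (map (nthc L) [0..<k])"

lemma tot_pre: "tot a \<Longrightarrow> tot b \<Longrightarrow> tot (\<lambda>n. pre (a n) (b n))"
  unfolding pre_def by (intro tot_build tot_nthc tot_d1 tot_d2)

lemma pre_le: "k \<le> len \<Longrightarrow> pre (list_encode (map p [0..<len])) k = list_encode (map p [0..<k])"
  unfolding pre_def by (intro arg_cong[where f=list_encode] map_cong) (auto simp: nthc_le)

definition az :: "nat \<Rightarrow> nat \<Rightarrow> nat" where
  "az cs m = rec_nat 1 (\<lambda>y r. if nthc cs y = 0 then 0 else r) m"

lemma tot_az: "tot a \<Longrightarrow> tot b \<Longrightarrow> tot (\<lambda>n. az (a n) (b n))"
  unfolding az_def
  apply (rule tot_rec2[where f="\<lambda>_. 1" and g="\<lambda>cs y r. if nthc cs y = 0 then 0 else r"])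
  by (intro tot_if0 tot_nthc tot_d1 tot_d2 tot_d1' tot_d2' tot_const tot_id; assumption?)+

lemma az_le: "m \<le> length cs \<Longrightarrow> az (list_encode cs) m \<noteq> 0 \<longleftrightarrow> (\<forall>j<m. cs ! j \<noteq> 0)"
  unfolding az_def
  by (induction m) (auto simp: nthc_le less_Suc_eq)

definition decr :: "nat \<Rightarrow> nat \<Rightarrow> nat" where
  "decr cs m = list_encode (map (\<lambda>j. nthc cs j - 1) [0..<m])"

lemma tot_decr: "tot a \<Longrightarrow> tot b \<Longrightarrow> tot (\<lambda>n. decr (a n) (b n))"
  unfolding decr_def by (intro tot_build tot_pred tot_nthc tot_d1 tot_d2)

abbreviation PRE where "PRE p k \<equiv> list_encode (map p [0..<k])"

lemma stage1:
  assumes M1: "partrec M1"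
  shows "\<exists>V. partrec V \<and> (\<forall>p i v. t2_out M1 p i v \<longrightarrow>
     (\<exists>K. \<forall>len. V (enc (PRE p len) i) = Some (if K \<le> len then Suc v else 0)))"
proof -
  define g1 where "g1 = (\<lambda>z. if win (d1 (d1 z)) (d2 z) = 0 then Some 0 else
     map_option (\<lambda>r. if r = 0 then 1 else 0::nat) (M1 (enc (pre (d1 (d1 z)) (d2 z)) (d2 (d1 z)))))"
  define F1 where "F1 = (\<lambda>z. if win (d1 (d1 z)) (d2 z) = 0 then Some 0 else
     M1 (enc (pre (d1 (d1 z)) (d2 z)) (d2 (d1 z))))"
  define V where "V = (\<lambda>a. Option.bind (rfind_opt (\<lambda>k. g1 (enc a k))) (\<lambda>k. F1 (enc a k)))"
  have pg1: "partrec g1" unfolding g1_def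
    by (intro pr_if tot_win tot_d1' tot_d2' tot_id pr_tot tot_const pr_map tot_if0
        pr_comp_tot[OF M1] tot_pair tot_pre)
  have pF1: "partrec F1" unfolding F1_def
    by (intro pr_if tot_win tot_d1' tot_d2' tot_id pr_tot tot_const
        pr_comp_tot[OF M1] tot_pair tot_pre)
  have pV: "partrec V" unfolding V_def
    by (intro pr_bind pr_rfind pg1 pF1)
  have spec: "\<exists>K. \<forall>len. V (enc (PRE p len) i) = Some (if K \<le> len then Suc v else 0)"
    if tv: "t2_out M1 p i v" for p i v
  proof -
    obtain K where K: "M1 (enc (PRE p K) i) = Some (Suc v)"
        "\<forall>j<K. M1 (enc (PRE p j) i) = Some 0"
      using tv unfolding t2_out_def by blast
    have "V (enc (PRE p len) i) = Some (if K \<le> len then Suc v else 0)" for len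
    proof (cases "K \<le> len")
      case True
      have "rfind_opt (\<lambda>k. g1 (enc (enc (PRE p len) i) k)) = Some K"
      proof (rule rfind_optI)
        fix m assume "m < K"
        then show "\<exists>k. g1 (enc (enc (PRE p len) i) m) = Some (Suc k)"
          using True K(2) by (simp add: g1_def win_le win_le' win_le0 pre_le)
      next
        show "g1 (enc (enc (PRE p len) i) K) = Some 0"
          using True K(1) by (simp add: g1_def win_le win_le' win_le0 pre_le)
      qed
      then show ?thesis using True K(1) by (simp add: V_def F1_def win_le win_le' win_le0 pre_le)
    next
      case False
      have "rfind_opt (\<lambda>k. g1 (enc (enc (PRE p len) i) k)) = Some (Suc len)"
      proof (rule rfind_optI)
        fix m assume "m < Suc len"
        then show "\<exists>k. g1 (enc (enc (PRE p len) i) m) = Some (Suc k)"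
          using False K(2) by (simp add: g1_def win_le win_le' win_le0 pre_le)
      next
        show "g1 (enc (enc (PRE p len) i) (Suc len)) = Some 0"
          by (simp add: g1_def win_le win_le' win_le0 del: upt_Suc)
      qed
      then show ?thesis using False by (simp add: V_def F1_def win_le win_le' win_le0 del: upt_Suc)
    qed
    then show ?thesis by blast
  qed
  from pV spec show ?thesis by blast
qed

lemma compose:
  assumes M1: "partrec M1" and M2: "partrec M2"
  shows "\<exists>M. partrec M \<and> (\<forall>p q r. t2_computes M1 p q \<longrightarrow> t2_computes M2 q r \<longrightarrow> t2_computes M p r)"
proof -
  obtain V where pV: "partrec V" and V: "\<And>p i v. t2_out M1 p i v \<Longrightarrow>
     (\<exists>K. \<forall>len. V (enc (PRE p len) i) = Some (if K \<le> len then Suc v else 0))"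
    using stage1[OF M1] by blast
  obtain B where pB: "partrec B" and B: "\<And>x k v. (\<forall>j<k. V (enc x j) = Some (v j)) \<Longrightarrow>
            B (enc x k) = Some (list_encode (map v [0..<k]))"
    using pr_build[OF pV] by blast
  define G2 where "G2 = (\<lambda>w. if az (d2 w) (d2 (d1 w)) = 0 then Some 0 else
     map_option (\<lambda>r. if r = 0 then 1 else 0::nat) (M2 (enc (decr (d2 w) (d2 (d1 w))) (d2 (d1 (d1 w))))))"
  define G3 where "G3 = (\<lambda>w. if az (d2 w) (d2 (d1 w)) = 0 then Some 0 else
     M2 (enc (decr (d2 w) (d2 (d1 w))) (d2 (d1 (d1 w)))))"
  define g2 where "g2 = (\<lambda>z. Option.bind (B (enc (d1 (d1 z)) (d2 z))) (\<lambda>cs. G2 (enc z cs)))"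
  define H2 where "H2 = (\<lambda>z. Option.bind (B (enc (d1 (d1 z)) (d2 z))) (\<lambda>cs. G3 (enc z cs)))"
  define M where "M = (\<lambda>x. Option.bind (rfind_opt (\<lambda>m. g2 (enc x m))) (\<lambda>m. H2 (enc x m)))"
  have pG2: "partrec G2" unfolding G2_def
    by (intro pr_if tot_az tot_d1' tot_d2' tot_id pr_tot tot_const pr_map tot_if0
        pr_comp_tot[OF M2] tot_pair tot_decr)
  have pG3: "partrec G3" unfolding G3_def
    by (intro pr_if tot_az tot_d1' tot_d2' tot_id pr_tot tot_const
        pr_comp_tot[OF M2] tot_pair tot_decr)
  have pg2: "partrec g2" unfolding g2_def
    by (intro pr_bind pG2 pr_comp_tot[OF pB] tot_pair tot_d1' tot_d2' tot_id)
  have pH2: "partrec H2" unfolding H2_def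
    by (intro pr_bind pG3 pr_comp_tot[OF pB] tot_pair tot_d1' tot_d2' tot_id)
  have pM: "partrec M" unfolding M_def
    by (intro pr_bind pr_rfind pg2 pH2)
  have correct: "t2_computes M p r" if hq: "t2_computes M1 p q" and hr: "t2_computes M2 q r" for p q r
  proof -
    have "\<forall>i. \<exists>K. \<forall>len. V (enc (PRE p len) i) = Some (if K \<le> len then Suc (q i) else 0)"
      using V hq unfolding t2_computes_def by blast
    then obtain Kf where Kf: "\<And>i len. V (enc (PRE p len) i) = Some (if Kf i \<le> len then Suc (q i) else 0)"
      by metis
    show ?thesis unfolding t2_computes_def
    proof
      fix n
      obtain K2 where K2: "M2 (enc (PRE q K2) n) = Some (Suc (r n))"
          "\<forall>j<K2. M2 (enc (PRE q j) n) = Some 0"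
        using hr unfolding t2_computes_def t2_out_def by blast
      define code where "code = (\<lambda>len j. if Kf j \<le> len then Suc (q j) else 0)"
      have Bc: "B (enc (PRE p len) m) = Some (list_encode (map (code len) [0..<m]))" for len m
        by (rule B) (simp add: Kf code_def)
      have azc: "az (list_encode (map (code len) [0..<m])) m \<noteq> 0 \<longleftrightarrow> (\<forall>j<m. Kf j \<le> len)" for len m
        by (subst az_le) (auto simp: code_def)
      have decrc: "(\<forall>j<m. Kf j \<le> len) \<Longrightarrow> decr (list_encode (map (code len) [0..<m])) m = PRE q m" for len m
        unfolding decr_def by (intro arg_cong[where f=list_encode] map_cong) (auto simp: nthc_le code_def)
      have Mval: "M (enc (PRE p len) n) = Some (if (\<forall>j<K2. Kf j \<le> len) then Suc (r n) else 0)" for len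
      proof (cases "\<forall>j<K2. Kf j \<le> len")
        case True
        have "rfind_opt (\<lambda>m. g2 (enc (enc (PRE p len) n) m)) = Some K2"
        proof (rule rfind_optI)
          fix m assume "m < K2"
          then have a: "\<forall>j<m. Kf j \<le> len" using True by auto
          show "\<exists>k. g2 (enc (enc (PRE p len) n) m) = Some (Suc k)"
            using azc[of len m] a decrc[OF a] K2(2) \<open>m < K2\<close>
            by (simp add: g2_def G2_def Bc)
        next
          show "g2 (enc (enc (PRE p len) n) K2) = Some 0"
            using azc[of len K2] True decrc[OF True] K2(1)
            by (simp add: g2_def G2_def Bc)
        qed
        then show ?thesis using azc[of len K2] True decrc[OF True] K2(1)
          by (simp add: M_def H2_def G3_def Bc)
      next
        case False
        define m1 where "m1 = (LEAST m. \<not> (\<forall>j<m. Kf j \<le> len))"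
        have m1: "\<not> (\<forall>j<m1. Kf j \<le> len)" unfolding m1_def by (rule LeastI[of _ K2]) (use False in auto)
        have m1K: "m1 \<le> K2" unfolding m1_def by (rule Least_le) (use False in auto)
        have below: "m < m1 \<Longrightarrow> \<forall>j<m. Kf j \<le> len" for m
          using not_less_Least[of m "\<lambda>m. \<not> (\<forall>j<m. Kf j \<le> len)"] unfolding m1_def by blast
        have "rfind_opt (\<lambda>m. g2 (enc (enc (PRE p len) n) m)) = Some m1"
        proof (rule rfind_optI)
          fix m assume "m < m1"
          then have a: "\<forall>j<m. Kf j \<le> len" using below by auto
          show "\<exists>k. g2 (enc (enc (PRE p len) n) m) = Some (Suc k)"
            using azc[of len m] a decrc[OF a] K2(2) \<open>m < m1\<close> m1K
            by (simp add: g2_def G2_def Bc)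
        next
          show "g2 (enc (enc (PRE p len) n) m1) = Some 0"
            using azc[of len m1] m1
            by (simp add: g2_def G2_def Bc)
        qed
        then show ?thesis using azc[of len m1] m1 False
          by (simp add: M_def H2_def G3_def Bc)
      qed
      define A where "A = (\<lambda>len. \<forall>j<K2. Kf j \<le> len)"
      have exA: "A (\<Sum>j<K2. Kf j)" unfolding A_def
        by (auto intro: member_le_sum)
      define l0 where "l0 = (LEAST len. A len)"
      have Al0: "A l0" unfolding l0_def by (rule LeastI[of A, OF exA])
      have nA: "j < l0 \<Longrightarrow> \<not> A j" for j unfolding l0_def by (rule not_less_Least)
      show "t2_out M p n (r n)" unfolding t2_out_def
      proof (intro exI conjI allI impI)
        show "M (enc (PRE p l0) n) = Some (Suc (r n))" using Mval[of l0] Al0 A_def by simp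
        fix j assume "j < l0"
        then show "M (enc (PRE p j) n) = Some 0" using Mval[of j] nA[of j] A_def by simp
      qed
    qed
  qed
  from pM correct show ?thesis by blast
qed



section \<open>bit-list codes\<close>

lemma bl_code_append_rep: "bl_code (replicate k True @ xs) = ((\<lambda>x. 2 * x + 2) ^^ k) (bl_code xs)"
  by (induction k) auto

lemma length_le_bl_code: "length w \<le> bl_code w"
  by (induction w) auto

definition stT :: "nat \<Rightarrow> nat" where
  "stT x = (if d1 x mod 2 = 0 then (if d1 x = 0 then x else enc ((d1 x - 1) div 2) (Suc (d2 x))) else x)"

lemma tot_stT: "tot stT"
  unfolding stT_def
  by (intro tot_if0 tot_mod2 tot_d1 tot_id tot_pair tot_div2 tot_pred tot_Suc' tot_d2)

lemma stT_iter:
  assumes "rest = [] \<or> hd rest = False"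
  shows "(stT ^^ k) (enc (bl_code (replicate n True @ rest)) cnt)
       = enc (bl_code (replicate (n - k) True @ rest)) (cnt + min k n)"
proof (induction k arbitrary: n cnt)
  case 0 then show ?case by simp
next
  case (Suc k)
  show ?case
  proof (cases n)
    case 0
    have fix0: "stT (enc (bl_code rest) c) = enc (bl_code rest) c" for c
      using assms by (cases rest) (auto simp: stT_def)
    have it: "(stT ^^ j) (enc (bl_code rest) c) = enc (bl_code rest) c" for j c
      by (induction j) (auto simp: fix0)
    show ?thesis using it[of "Suc k" cnt] 0 by (simp del: funpow.simps)
  next
    case (Suc n')
    have "stT (enc (bl_code (replicate n True @ rest)) cnt) = enc (bl_code (replicate n' True @ rest)) (Suc cnt)"
      using Suc by (simp add: stT_def)
    then show ?thesis using Suc.IH[of n' "Suc cnt"] \<open>n = Suc n'\<close>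
      by (simp add: funpow_Suc_right del: funpow.simps)
  qed
qed

definition fin :: "nat \<Rightarrow> nat" where
  "fin c = (stT ^^ ((c - 1) div 2)) (enc ((c - 1) div 2) 0)"

definition turnT :: "nat \<Rightarrow> nat \<Rightarrow> nat" where
  "turnT c v = (if c = 0 then 0 else if c mod 2 = 0 then 1 else if d1 (fin c) = 0 then 1 else v)"

definition sigT :: "nat \<Rightarrow> nat" where
  "sigT c = enc (d2 (fin c) - 1) (2 * ((d1 (fin c) - 1) div 2))"

lemma tot_fin: "tot fin"
  unfolding fin_def by (intro tot_funpow tot_stT tot_pair tot_div2 tot_pred tot_id tot_const)

lemma tot_sigT: "tot sigT"
  unfolding sigT_def by (intro tot_pair tot_pred tot_d2' tot_d1' tot_mult tot_div2 tot_comp[OF tot_fin] tot_const tot_id)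

lemma tot_turnT: "tot (\<lambda>x. turnT (d1 x) (d2 x))"
  unfolding turnT_def by (intro tot_if0 tot_mod2 tot_d1 tot_d2 tot_d1' tot_comp[OF tot_fin] tot_const)

section \<open>composite turn function\<close>

definition dcomp :: "(nat \<Rightarrow> bool list \<Rightarrow> player) \<Rightarrow> bool list \<Rightarrow> player" where
  "dcomp ds w = (case w of [] \<Rightarrow> P1 | True # _ \<Rightarrow> P2 | False # w'' \<Rightarrow>
      (let n = length (takeWhile id w''); rest = drop n w'' in
       if rest = [] then P2 else ds (n - 1) (tl rest)))"

lemma turnT_correct:
  "(turnT (bl_code w) (p (sigT (bl_code w))) = 0) \<longleftrightarrow>
   dcomp (\<lambda>i w. if p (enc i (2 * bl_code w)) = 0 then P1 else P2) w = P1"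
proof (cases w)
  case Nil then show ?thesis by (simp add: turnT_def dcomp_def)
next
  case (Cons b w'')
  show ?thesis
  proof (cases b)
    case True
    then show ?thesis using Cons by (simp add: turnT_def dcomp_def)
  next
    case False
    define n where "n = length (takeWhile id w'')"
    define rest where "rest = drop n w''"
    have w'': "w'' = replicate n True @ rest"
    proof -
      have "takeWhile id w'' = replicate n True"
        unfolding n_def by (metis (full_types) id_apply replicate_length_same set_takeWhileD)
      then show ?thesis unfolding rest_def n_def
        by (metis append_take_drop_id n_def takeWhile_eq_take)
    qed
    have hr: "rest = [] \<or> hd rest = False"
      unfolding rest_def n_def
      by (metis (full_types) dropWhile_eq_drop hd_dropWhile id_apply)
    have c: "bl_code w = 2 * bl_code w'' + 1" using Cons False by simp
    have nle: "n \<le> bl_code w''" using length_le_bl_code[of w''] unfolding n_def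
      by (meson dual_order.trans length_takeWhile_le)
    have f: "fin (bl_code w) = enc (bl_code rest) n"
      unfolding fin_def c using stT_iter[OF hr, of "bl_code w''" n 0] w'' nle by simp
    show ?thesis
    proof (cases rest)
      case Nil
      then have "length w'' \<le> n" using rest_def by simp
      then show ?thesis using Cons False c f Nil
        by (simp add: turnT_def dcomp_def n_def[symmetric] rest_def[symmetric])
    next
      case (Cons b' w''')
      with hr have b': "b' = False" by simp
      have "sigT (bl_code w) = enc (n - 1) (2 * bl_code w''')"
        unfolding sigT_def f using Cons b' by simp
      moreover have dr: "drop n w'' = False # w'''" using Cons b' rest_def by simp
      moreover have "\<not> length w'' \<le> n" using dr by (metis drop_eq_Nil list.distinct(1))
      ultimately show ?thesis using \<open>w = b # w''\<close> False c f Cons b'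
        by (simp add: turnT_def dcomp_def n_def[symmetric] rest_def[symmetric])
    qed
  qed
qed



lemma hist_play: "hist t m = map (play t) [0..<m]"
  by (induction m) (auto simp: play_def)

lemma hist_take:
  assumes "\<forall>j<length v. t (take j v) = v ! j"
  shows "j \<le> length v \<Longrightarrow> hist t j = take j v"
proof (induction j)
  case 0 then show ?case by simp
next
  case (Suc j)
  then have "hist t (Suc j) = take j v @ [v ! j]" using assms by simp
  also have "\<dots> = take (Suc j) v" using Suc.prems by (simp add: take_Suc_conv_app_nth)
  finally show ?case .
qed

lemma play_prefix:
  assumes "\<forall>j<length v. t (take j v) = v ! j"
  shows "play t = prepend v (play (\<lambda>w. t (v @ w)))"
proof -
  have h: "hist t (length v + m) = v @ hist (\<lambda>w. t (v @ w)) m" for m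
    by (induction m) (use hist_take[OF assms, of "length v"] in auto)
  show ?thesis
  proof
    fix n
    show "play t n = prepend v (play (\<lambda>w. t (v @ w))) n"
    proof (cases "n < length v")
      case True
      then show ?thesis using hist_take[OF assms, of n] assms by (simp add: play_def prepend_def)
    next
      case False
      then have "n = length v + (n - length v)" by simp
      then have "hist t n = v @ hist (\<lambda>w. t (v @ w)) (n - length v)" using h by metis
      then show ?thesis using False by (simp add: play_def prepend_def)
    qed
  qed
qed

lemma prepend_eq: "prepend w a = x \<longleftrightarrow> (\<forall>i<length w. x i = w ! i) \<and> a = (\<lambda>n. x (n + length w))"
proof
  assume "prepend w a = x"
  then show "(\<forall>i<length w. x i = w ! i) \<and> a = (\<lambda>n. x (n + length w))"
    by (auto simp: prepend_def)
next
  assume a: "(\<forall>i<length w. x i = w ! i) \<and> a = (\<lambda>n. x (n + length w))"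
  show "prepend w a = x"
  proof
    fix n show "prepend w a n = x n" using a by (cases "n < length w") (auto simp: prepend_def)
  qed
qed

lemma mem_rescale: "x \<in> rescale w A \<longleftrightarrow> (\<forall>i<length w. x i = w ! i) \<and> (\<lambda>n. x (n + length w)) \<in> A"
proof -
  have "x \<in> rescale w A \<longleftrightarrow> (\<exists>a. a \<in> A \<and> prepend w a = x)" unfolding rescale_def by auto
  also have "\<dots> \<longleftrightarrow> (\<forall>i<length w. x i = w ! i) \<and> (\<lambda>n. x (n + length w)) \<in> A"
    unfolding prepend_eq by auto
  finally show ?thesis .
qed

lemma prepend_append: "prepend (u @ v) y = prepend u (prepend v y)"
  by (rule ext) (auto simp: prepend_def nth_append)

lemma not_both: "winning d A P1 s1 \<Longrightarrow> winning d A P2 s2 \<Longrightarrow> False"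
proof -
  assume a: "winning d A P1 s1" "winning d A P2 s2"
  define t where "t = (\<lambda>w. if d w = P1 then s1 w else s2 w)"
  have c1: "\<forall>w. d w = P1 \<longrightarrow> t w = s1 w" unfolding t_def by simp
  have c2: "\<forall>w. d w = P2 \<longrightarrow> t w = s2 w" unfolding t_def by simp
  have "play t \<in> A" using a(1) c1 unfolding winning_def by blast
  moreover have "play t \<notin> A" using a(2) c2 unfolding winning_def by blast
  ultimately show False by simp
qed

definition comb :: "(nat \<Rightarrow> (nat \<Rightarrow> bool) set) \<Rightarrow> (nat \<Rightarrow> bool) set" where
  "comb As = {\<lambda>n. n \<noteq> 0} \<union> (\<Union>n. rescale (replicate n True @ [False]) (As n))"

lemma nth_rep_F: "i < Suc n \<Longrightarrow> (replicate n True @ [False]) ! i = (i < n)"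
  by (auto simp: nth_append less_Suc_eq)

lemma mem_comb: "x \<in> comb As \<longleftrightarrow> x = (\<lambda>n. n \<noteq> 0) \<or>
    (\<exists>n. (\<forall>i<n. x i) \<and> \<not> x n \<and> (\<lambda>m. x (m + Suc n)) \<in> As n)"
proof -
  have "x \<in> rescale (replicate n True @ [False]) (As n) \<longleftrightarrow>
        (\<forall>i<n. x i) \<and> \<not> x n \<and> (\<lambda>m. x (m + Suc n)) \<in> As n" for n
    unfolding mem_rescale using nth_rep_F[of _ n] by (auto simp: less_Suc_eq)
  then show ?thesis unfolding comb_def by blast
qed

lemma comb_T: "(\<lambda>_. True) \<notin> comb As"
  unfolding mem_comb by (auto dest: fun_cong[where x=0])

lemma comb_0T: "(\<lambda>n. n \<noteq> 0) \<in> comb As"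
  unfolding comb_def by blast

lemma comb_in: "y \<in> As n \<Longrightarrow> prepend (replicate n True @ [False]) y \<in> comb As"
  unfolding comb_def rescale_def by blast

lemma comb_out:
  assumes "n \<ge> 1" "prepend (replicate n True @ [False]) y \<in> comb As"
  shows "y \<in> As n"
proof -
  let ?x = "prepend (replicate n True @ [False]) y"
  have xi: "?x i = (if i < Suc n then i < n else y (i - Suc n))" for i
    by (auto simp: prepend_def nth_rep_F)
  have "?x \<noteq> (\<lambda>n. n \<noteq> 0)"
  proof
    assume eq: "?x = (\<lambda>n. n \<noteq> 0)"
    from fun_cong[OF eq, of 0] xi[of 0] assms(1) show False by simp
  qed
  then obtain m where m: "\<forall>i<m. ?x i" "\<not> ?x m" "(\<lambda>k. ?x (k + Suc m)) \<in> As m"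
    using assms(2) unfolding mem_comb by blast
  have "m = n"
  proof (rule ccontr)
    assume "m \<noteq> n"
    then consider "m < n" | "n < m" by linarith
    then show False
    proof cases
      case 1 then show False using m(2) xi[of m] by simp
    next
      case 2 then show False using m(1) xi[of n] by auto
    qed
  qed
  moreover have "(\<lambda>k. ?x (k + Suc n)) = y" using xi by auto
  ultimately show ?thesis using m(3) by simp
qed

lemma W_in:
  assumes "y \<in> As n"
  shows "prepend (False # replicate n True @ [False]) y \<in> comb (\<lambda>_. comb As)"
proof -
  have "prepend (replicate 0 True @ [False]) (prepend (replicate n True @ [False]) y) \<in> comb (\<lambda>_. comb As)"
    by (rule comb_in[where As="\<lambda>_. comb As"]) (rule comb_in[where As=As, OF assms])
  then show ?thesis using prepend_append[of "[False]" "replicate n True @ [False]" y] by simp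
qed

lemma W_out:
  assumes "n \<ge> 1" "prepend (False # replicate n True @ [False]) y \<in> comb (\<lambda>_. comb As)"
  shows "y \<in> As n"
proof -
  let ?x = "prepend (False # replicate n True @ [False]) y"
  have x0: "\<not> ?x 0" by (simp add: prepend_def)
  have xn: "\<not> ?x (Suc n)" by (simp add: prepend_def nth_append)
  have "?x \<noteq> (\<lambda>n. n \<noteq> 0)"
  proof
    assume eq: "?x = (\<lambda>n. n \<noteq> 0)"
    from fun_cong[OF eq, of "Suc n"] xn show False by simp
  qed
  then obtain m where m: "\<forall>i<m. ?x i" "\<not> ?x m" "(\<lambda>k. ?x (k + Suc m)) \<in> comb As"
    using assms(2) unfolding mem_comb by blast
  have "m = 0" using m(1) x0 by (cases m) auto
  moreover have "(\<lambda>k. ?x (k + 1)) = prepend (replicate n True @ [False]) y"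
    by (auto simp: prepend_def nth_append)
  ultimately show ?thesis using m(3) comb_out[OF assms(1)] by simp
qed



lemma dc_nil: "dcomp ds [] = P1" by (simp add: dcomp_def)
lemma dc_T: "dcomp ds (True # w) = P2" by (simp add: dcomp_def)
lemma tw_rep: "takeWhile id (replicate j True @ w) = replicate j True @ takeWhile id w"
  by (induction j) auto
lemma dc_FT: "dcomp ds (False # replicate j True) = P2"
  using tw_rep[of j "[]"] by (simp add: dcomp_def)
lemma dc_game: "dcomp ds (False # replicate n True @ False # w) = ds (n - 1) w"
  using tw_rep[of n "False # w"] by (simp add: dcomp_def)

abbreviation Wset :: "(nat \<Rightarrow> (nat \<Rightarrow> bool) set) \<Rightarrow> (nat \<Rightarrow> bool) set" where
  "Wset As \<equiv> comb (\<lambda>_. comb (\<lambda>m. As (m - 1)))"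

definition sstar :: "(nat \<Rightarrow> profile) \<Rightarrow> profile" where
  "sstar ss u = (case u of False # u' \<Rightarrow>
      (let n = length (takeWhile id u'); rest = drop n u' in if rest = [] then False else ss (n - 1) (tl rest))
     | _ \<Rightarrow> False)"

lemma sstar_nil: "sstar ss [] = False" by (simp add: sstar_def)
lemma sstar_game: "sstar ss (False # replicate n True @ False # w) = ss (n - 1) w"
  using tw_rep[of n "False # w"] by (simp add: sstar_def)

lemma exists_win:
  assumes ws: "\<And>i. winning (ds i) (As i) P1 (ss i)"
  shows "winning (dcomp ds) (Wset As) P1 (sstar ss)"
  unfolding winning_def
proof (intro allI impI)
  fix t assume ag: "\<forall>w. dcomp ds w = P1 \<longrightarrow> t w = sstar ss w"
  let ?y = "play t"
  have t0: "t [] = False" using ag[rule_format, OF dc_nil] sstar_nil by simp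
  have y0: "\<not> ?y 0" using t0 by (simp add: play_def)
  show "(play t \<in> Wset As) = (P1 = P1)"
  proof (cases "\<forall>j. ?y (Suc j)")
    case True
    have "?y = (\<lambda>n. n \<noteq> 0)"
    proof
      fix n show "?y n = (n \<noteq> 0)" using True y0 by (cases n) auto
    qed
    then show ?thesis using comb_0T by simp
  next
    case False
    define n where "n = (LEAST j. \<not> ?y (Suc j))"
    have ex: "\<exists>j. \<not> ?y (Suc j)" using False by blast
    have yn: "\<not> ?y (Suc n)" unfolding n_def by (rule LeastI_ex[where P="\<lambda>j. \<not> ?y (Suc j)", OF ex])
    have yb: "j < n \<Longrightarrow> ?y (Suc j)" for j unfolding n_def using not_less_Least by blast
    define v where "v = False # replicate n True @ [False]"
    have lv: "length v = Suc (Suc n)" by (simp add: v_def)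
    have vy: "j < length v \<Longrightarrow> v ! j = ?y j" for j
    proof -
      assume "j < length v"
      show ?thesis
      proof (cases j)
        case 0 then show ?thesis using y0 by (simp add: v_def)
      next
        case (Suc k)
        show ?thesis
        proof (cases "k < n")
          case True then show ?thesis using yb[of k] Suc by (simp add: v_def nth_append)
        next
          case False
          then have "k = n" using \<open>j < length v\<close> Suc lv by simp
          then show ?thesis using yn Suc by (simp add: v_def nth_append)
        qed
      qed
    qed
    have pre: "\<forall>j<length v. t (take j v) = v ! j"
    proof (intro allI impI)
      fix j assume j: "j < length v"
      have "take j v = map ?y [0..<j]"
        using j vy by (intro nth_equalityI) auto
      then have "take j v = hist t j" by (simp add: hist_play)
      then show "t (take j v) = v ! j" using vy[OF j] by (simp add: play_def)
    qed
    have pt: "play t = prepend v (play (\<lambda>w. t (v @ w)))" by (rule play_prefix[OF pre])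
    have "play (\<lambda>w. t (v @ w)) \<in> As (n - 1)"
      using ws[of "n - 1"] unfolding winning_def
    proof (elim allE impE)
      show "\<forall>w. ds (n - 1) w = P1 \<longrightarrow> t (v @ w) = ss (n - 1) w"
        using ag by (simp add: v_def dc_game sstar_game)
    qed simp
    then have "prepend v (play (\<lambda>w. t (v @ w))) \<in> Wset As"
      unfolding v_def by (rule W_in[where As="\<lambda>m. As (m - 1)"])
    then show ?thesis using pt by simp
  qed
qed

lemma s_root:
  assumes "winning (dcomp ds) (Wset As) P1 s"
  shows "s [] = False"
proof (rule ccontr)
  assume "s [] \<noteq> False"
  then have sT: "s []" by simp
  define t where "t = (\<lambda>w. if dcomp ds w = P1 then s w else True)"
  have ag: "\<forall>w. dcomp ds w = P1 \<longrightarrow> t w = s w" by (simp add: t_def)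
  have h: "hist t j = replicate j True" for j
  proof (induction j)
    case 0 then show ?case by simp
  next
    case (Suc j)
    have "t (replicate j True)" 
      using sT by (cases j) (auto simp: t_def dc_nil dc_T)
    with Suc show ?case by (simp add: replicate_append_same)
  qed
  have "play t = (\<lambda>_. True)"
  proof
    fix n show "play t n = True" unfolding play_def h
      using sT by (cases n) (auto simp: t_def dc_nil dc_T)
  qed
  moreover have "play t \<in> Wset As" using assms ag unfolding winning_def by blast
  ultimately show False using comb_T by metis
qed

lemma extract_win:
  assumes ws: "winning (dcomp ds) (Wset As) P1 s"
  shows "winning (ds i) (As i) P1 (\<lambda>w. s (False # replicate (Suc i) True @ False # w))"
  unfolding winning_def
proof (intro allI impI)
  fix t assume ag: "\<forall>w. ds i w = P1 \<longrightarrow> t w = s (False # replicate (Suc i) True @ False # w)"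
  define v where "v = False # replicate (Suc i) True @ [False]"
  have vw: "v @ w = False # replicate (Suc i) True @ False # w" for w by (simp add: v_def)
  define t' where "t' = (\<lambda>u. if (\<exists>w. u = v @ w) then t (drop (length v) u)
      else if (\<exists>j<length v. u = take j v) then v ! length u else s u)"
  have s0: "s [] = False" by (rule s_root[OF ws])
  have ag': "\<forall>u. dcomp ds u = P1 \<longrightarrow> t' u = s u"
  proof (intro allI impI)
    fix u assume P: "dcomp ds u = P1"
    show "t' u = s u"
    proof (cases "\<exists>w. u = v @ w")
      case True
      then obtain w where u: "u = v @ w" by blast
      have "ds i w = P1" using P unfolding u vw dc_game by simp
      then show ?thesis using ag u vw by (simp add: t'_def)
    next
      case False
      show ?thesis
      proof (cases "\<exists>j<length v. u = take j v")
        case True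
        then obtain j where j: "j < length v" "u = take j v" by blast
        show ?thesis
        proof (cases j)
          case 0 then show ?thesis using j False s0 by (auto simp: t'_def v_def)
        next
          case (Suc k)
          then have "k \<le> Suc i" using j(1) by (simp add: v_def)
          then have "take k (replicate (Suc i) True @ [False]) = replicate k True"
            by (simp only: take_append) (simp del: replicate_Suc add: take_replicate min_def)
          then have "u = False # replicate k True" using j(2) Suc
            by (simp add: v_def del: replicate_Suc)
          then show ?thesis using P dc_FT by simp
        qed
      next
        case False2: False
        then show ?thesis using False by (auto simp: t'_def)
      qed
    qed
  qed
  have pre: "\<forall>j<length v. t' (take j v) = v ! j"
  proof (intro allI impI)
    fix j assume j: "j < length v"
    have "\<not> (\<exists>w. take j v = v @ w)"
    proof
      assume "\<exists>w. take j v = v @ w"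
      then obtain w where "take j v = v @ w" by blast
      then have "length (take j v) = length v + length w" by simp
      with j show False by simp
    qed
    then show "t' (take j v) = v ! j" using j by (auto simp: t'_def)
  qed
  have "play t' = prepend v (play (\<lambda>w. t' (v @ w)))" by (rule play_prefix[OF pre])
  moreover have "(\<lambda>w. t' (v @ w)) = t" by (auto simp: t'_def)
  ultimately have pt: "play t' = prepend v (play t)" by simp
  have "play t' \<in> Wset As" using ws ag' unfolding winning_def by blast
  then have "play t \<in> As (Suc i - 1)"
    using W_out[where As="\<lambda>m. As (m - 1)" and n="Suc i"] pt unfolding v_def by simp
  then show "(play t \<in> As i) = (P1 = P1)" by simp
qed



lemma idx_machine: "tot \<sigma> \<Longrightarrow> \<exists>M. partrec M \<and> (\<forall>p. t2_computes M p (\<lambda>n. p (\<sigma> n)))"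
  using digit_machine[OF _ tot_d2, of \<sigma>] by simp

lemma bpair_odd: "bpair a b (2 * m + 1) = b m" by (simp add: bpair_def)
lemma bpair_odd': "bpair a b (Suc (2 * m)) = b m" by (simp add: bpair_def)
lemma bsnd_bpair: "bsnd (bpair a b) = b" by (simp add: bsnd_def bpair_def)
lemma bfst_bpair: "bfst (bpair a b) = a" by (simp add: bfst_def bpair_def)

lemma easy_dir:
  "weihrauch_le (game_rep delta) profile_rep FindWS
     (seq_rep (game_rep delta)) (seq_rep profile_rep) (parallelization FindWS)"
proof -
  obtain MH where pH: "partrec MH" and H: "\<And>p. t2_computes MH p (\<lambda>n. p (d2 n))"
    using idx_machine[OF tot_d2] by blast
  have tK: "tot (\<lambda>n. 2 * enc 0 n + 1)" by (intro tot_add tot_mult tot_pair tot_const tot_id)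
  obtain MK where pK: "partrec MK" and K: "\<And>p. t2_computes MK p (\<lambda>n. p (2 * enc 0 n + 1))"
    using idx_machine[OF tK] by blast
  show ?thesis unfolding weihrauch_le_def
  proof (rule exI[of _ MK], rule exI[of _ MH], intro conjI pK pH allI impI)
    fix p x assume a: "game_rep delta p = Some x \<and> FindWS x \<noteq> {}"
    define h where "h = (\<lambda>n. p (d2 n))"
    have bh: "bcomp h i = p" for i by (simp add: bcomp_def h_def)
    have sh: "seq_rep (game_rep delta) h = Some (\<lambda>i. x)" using a by (simp add: seq_rep_def bh)
    have "FindWS x \<noteq> {}" using a by simp
    then obtain s where s: "s \<in> FindWS x" by blast
    have "(\<lambda>i. s) \<in> parallelization FindWS (\<lambda>i. x)"
      using s unfolding parallelization_def by simp
    then have par: "parallelization FindWS (\<lambda>i. x) \<noteq> {}" by blast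
    show "\<exists>h. t2_computes MH p h \<and> (\<exists>u. seq_rep (game_rep delta) h = Some u \<and> parallelization FindWS u \<noteq> {}) \<and>
        (\<forall>G. realizer (seq_rep (game_rep delta)) (seq_rep profile_rep) (parallelization FindWS) G \<longrightarrow>
           (\<exists>k. t2_computes MK (bpair p (G h)) k \<and> (\<exists>y. profile_rep k = Some y \<and> y \<in> FindWS x)))"
    proof (intro exI[of _ h] conjI)
      show "t2_computes MH p h" unfolding h_def by (rule H)
      show "\<exists>u. seq_rep (game_rep delta) h = Some u \<and> parallelization FindWS u \<noteq> {}"
        using sh par by blast
    next
      show "\<forall>G. realizer (seq_rep (game_rep delta)) (seq_rep profile_rep) (parallelization FindWS) G \<longrightarrow>
           (\<exists>k. t2_computes MK (bpair p (G h)) k \<and> (\<exists>y. profile_rep k = Some y \<and> y \<in> FindWS x))"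
      proof (intro allI impI)
      fix G assume R: "realizer (seq_rep (game_rep delta)) (seq_rep profile_rep) (parallelization FindWS) G"
      have "\<exists>v. seq_rep profile_rep (G h) = Some v \<and> v \<in> parallelization FindWS (\<lambda>i. x)"
        using R[unfolded realizer_def, rule_format, of h "\<lambda>i. x"] sh par by simp
      then obtain v where v: "seq_rep profile_rep (G h) = Some v" "v \<in> parallelization FindWS (\<lambda>i. x)"
        by blast
      have v0: "v 0 = (\<lambda>w. bcomp (G h) 0 (bl_code w) \<noteq> 0)"
        using v(1) by (auto simp: seq_rep_def profile_rep_def)
      have v0F: "v 0 \<in> FindWS x" using v(2) unfolding parallelization_def by simp
      let ?k = "\<lambda>n. bpair p (G h) (2 * enc 0 n + 1)"
      have k1: "t2_computes MK (bpair p (G h)) ?k" by (rule K)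
      have "profile_rep ?k = Some (v 0)" using v0
        by (simp add: profile_rep_def bpair_odd bpair_odd' bcomp_def)
      with k1 v0F show "\<exists>k. t2_computes MK (bpair p (G h)) k \<and> (\<exists>y. profile_rep k = Some y \<and> y \<in> FindWS x)"
        by blast
    qed
    qed
  qed
qed

lemma bl_code_game: "bl_code (False # replicate (Suc i) True @ False # w)
   = 2 * (((\<lambda>x. 2 * x + 2) ^^ Suc i) (2 * bl_code w + 1)) + 1"
  using bl_code_append_rep[of "Suc i" "False # w"] by simp

lemma FindWS_iff: "FindWS (d, A) = (if (\<exists>s. winning d A P1 s) then {s. winning d A P1 s \<or> winning d A P2 s} else {})"
  by (simp add: FindWS_def)

lemma hard_dir:
  assumes SA: "standing_assumptions delta" and CC: "closed_under_comb delta"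
  shows "weihrauch_le (seq_rep (game_rep delta)) (seq_rep profile_rep) (parallelization FindWS)
     (game_rep delta) profile_rep FindWS"
proof -
  obtain phi where pphi: "partrec phi" and phi: "\<And>rs As. (\<forall>n. delta (rs n) = Some (As n)) \<Longrightarrow>
        (\<exists>q. t2_computes phi (btuple rs) q \<and>
             delta q = Some ({\<lambda>n. n \<noteq> 0} \<union> (\<Union>n. rescale (replicate n True @ [False]) (As n))))"
    using CC unfolding closed_under_comb_def by blast
  have t1: "tot (\<lambda>n. enc (d1 n - 1) (2 * d2 n + 1))"
    by (intro tot_pair tot_pred tot_add tot_mult tot_d1 tot_d2 tot_const)
  obtain M1 where pM1: "partrec M1" and M1: "\<And>p. t2_computes M1 p (\<lambda>n. p (enc (d1 n - 1) (2 * d2 n + 1)))"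
    using idx_machine[OF t1] by blast
  obtain M2 where pM2: "partrec M2" and M2: "\<And>p. t2_computes M2 p (\<lambda>n. p (d2 n))"
    using idx_machine[OF tot_d2] by blast
  obtain C1 where pC1: "partrec C1" and C1: "\<And>p q r. t2_computes M1 p q \<Longrightarrow> t2_computes phi q r \<Longrightarrow> t2_computes C1 p r"
    using compose[OF pM1 pphi] by blast
  obtain C2 where pC2: "partrec C2" and C2: "\<And>p q r. t2_computes C1 p q \<Longrightarrow> t2_computes M2 q r \<Longrightarrow> t2_computes C2 p r"
    using compose[OF pC1 pM2] by blast
  obtain C3 where pC3: "partrec C3" and C3: "\<And>p q r. t2_computes C2 p q \<Longrightarrow> t2_computes phi q r \<Longrightarrow> t2_computes C3 p r"
    using compose[OF pC2 pphi] by blast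
  obtain MT where pMT: "partrec MT" and MT: "\<And>p. t2_computes MT p (\<lambda>n. turnT (d1 (enc n (p (sigT n)))) (d2 (enc n (p (sigT n)))))"
    using digit_machine[OF tot_sigT tot_turnT] by blast
  obtain MH where pMH: "partrec MH" and MH: "\<And>p qa qb. t2_computes MT p qa \<Longrightarrow> t2_computes C3 p qb \<Longrightarrow>
            t2_computes MH p (bpair qa qb)"
    using bpair_machine[OF pMT pC3] by blast
  define E where "E = (\<lambda>x::nat. 2 * x + 2)"
  have tE: "tot E" unfolding E_def by (intro tot_add tot_mult tot_const tot_id)
  have tK: "tot (\<lambda>m. 2 * (2 * ((E ^^ Suc (d1 m)) (2 * d2 m + 1)) + 1) + 1)"
    by (intro tot_add tot_mult tot_funpow tE tot_Suc' tot_d1 tot_d2 tot_const)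
  obtain MK where pMK: "partrec MK" and MK: "\<And>p. t2_computes MK p (\<lambda>m. p (2 * (2 * ((E ^^ Suc (d1 m)) (2 * d2 m + 1)) + 1) + 1))"
    using idx_machine[OF tK] by blast
  show ?thesis unfolding weihrauch_le_def
  proof (rule exI[of _ MK], rule exI[of _ MH], intro conjI pMK pMH allI impI)
    fix p xs assume a: "seq_rep (game_rep delta) p = Some xs \<and> parallelization FindWS xs \<noteq> {}"
    have nn: "\<forall>i. game_rep delta (bcomp p i) \<noteq> None" and xs: "xs = (\<lambda>i. the (game_rep delta (bcomp p i)))"
      using a by (auto simp: seq_rep_def split: if_splits)
    define As where "As = (\<lambda>i. the (delta (bsnd (bcomp p i))))"
    define ds where "ds = (\<lambda>i w. if p (enc i (2 * bl_code w)) = 0 then P1 else P2)"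
    have dA: "delta (bsnd (bcomp p i)) = Some (As i)" for i
      using nn[rule_format, of i] unfolding As_def by (auto simp: game_rep_def split: option.splits)
    have xsi: "xs i = (ds i, As i)" for i
      using dA[of i] unfolding xs ds_def by (simp add: game_rep_def bfst_def bcomp_def)
    obtain yy where yy: "yy \<in> parallelization FindWS xs" using a by blast
    have "\<forall>i. \<exists>s. winning (ds i) (As i) P1 s"
    proof
      fix i
      have "yy i \<in> FindWS (xs i)" using yy unfolding parallelization_def by simp
      then have "yy i \<in> FindWS (ds i, As i)" using xsi[of i] by simp
      then show "\<exists>s. winning (ds i) (As i) P1 s" unfolding FindWS_iff by (auto split: if_splits)
    qed
    then obtain ss where ss: "\<And>i. winning (ds i) (As i) P1 (ss i)" by metis
    define rs1 where "rs1 = (\<lambda>i. bsnd (bcomp p (i - 1)))"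
    have drs1: "\<forall>n. delta (rs1 n) = Some (As (n - 1))" unfolding rs1_def using dA by simp
    have bt1: "btuple rs1 = (\<lambda>n. p (enc (d1 n - 1) (2 * d2 n + 1)))"
      by (auto simp: btuple_def rs1_def bsnd_def bcomp_def case_prod_beta)
    obtain inner where inner: "t2_computes phi (btuple rs1) inner"
        "delta inner = Some ({\<lambda>n. n \<noteq> 0} \<union> (\<Union>n. rescale (replicate n True @ [False]) (As (n - 1))))"
      using phi[OF drs1] by blast
    have dinner: "delta inner = Some (comb (\<lambda>m. As (m - 1)))" using inner(2) unfolding comb_def .
    have tinner: "t2_computes C1 p inner" using C1[OF M1 inner(1)[unfolded bt1]] .
    define rs2 where "rs2 = (\<lambda>i::nat. inner)"
    have drs2: "\<forall>n. delta (rs2 n) = Some (comb (\<lambda>m. As (m - 1)))" unfolding rs2_def using dinner by simp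
    have bt2: "btuple rs2 = (\<lambda>n. inner (d2 n))"
      by (auto simp: btuple_def rs2_def case_prod_beta)
    obtain outer where outer: "t2_computes phi (btuple rs2) outer"
        "delta outer = Some ({\<lambda>n. n \<noteq> 0} \<union> (\<Union>n. rescale (replicate n True @ [False]) (comb (\<lambda>m. As (m - 1)))))"
      using phi[OF drs2] by blast
    have douter: "delta outer = Some (Wset As)" using outer(2) unfolding comb_def[of "\<lambda>_. comb (\<lambda>m. As (m - 1))"] .
    have t2o: "t2_computes C2 p (\<lambda>n. inner (d2 n))" using C2[OF tinner M2] .
    have touter: "t2_computes C3 p outer" using C3[OF t2o outer(1)[unfolded bt2]] .
    define turn where "turn = (\<lambda>n. turnT n (p (sigT n)))"
    have tturn: "t2_computes MT p turn" using MT[of p] unfolding turn_def by simp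
    define h where "h = bpair turn outer"
    have th: "t2_computes MH p h" unfolding h_def by (rule MH[OF tturn touter])
    have dturn: "(\<lambda>w. if bfst h (bl_code w) = 0 then P1 else P2) = dcomp ds"
    proof
      fix w
      show "(if bfst h (bl_code w) = 0 then P1 else P2) = dcomp ds w"
        using turnT_correct[of w p] unfolding h_def bfst_bpair turn_def ds_def
        by (cases "dcomp (\<lambda>i w. if p (enc i (2 * bl_code w)) = 0 then P1 else P2) w") auto
    qed
    have gh: "game_rep delta h = Some (dcomp ds, Wset As)"
      unfolding game_rep_def h_def bsnd_bpair douter using dturn unfolding h_def by simp
    have wstar: "winning (dcomp ds) (Wset As) P1 (sstar ss)" by (rule exists_win[OF ss])
    have Fne: "FindWS (dcomp ds, Wset As) \<noteq> {}"
      unfolding FindWS_iff using wstar by auto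
    show "\<exists>h. t2_computes MH p h \<and> (\<exists>u. game_rep delta h = Some u \<and> FindWS u \<noteq> {}) \<and>
              (\<forall>G. realizer (game_rep delta) profile_rep FindWS G \<longrightarrow>
                 (\<exists>k. t2_computes MK (bpair p (G h)) k \<and>
                      (\<exists>y. seq_rep profile_rep k = Some y \<and> y \<in> parallelization FindWS xs)))"
    proof (intro exI[of _ h] conjI)
      show "t2_computes MH p h" by (rule th)
      show "\<exists>u. game_rep delta h = Some u \<and> FindWS u \<noteq> {}" using gh Fne by blast
    next
      show "\<forall>G. realizer (game_rep delta) profile_rep FindWS G \<longrightarrow>
                 (\<exists>k. t2_computes MK (bpair p (G h)) k \<and>
                      (\<exists>y. seq_rep profile_rep k = Some y \<and> y \<in> parallelization FindWS xs))"
      proof (intro allI impI)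
        fix G assume R: "realizer (game_rep delta) profile_rep FindWS G"
        have "\<exists>v. profile_rep (G h) = Some v \<and> v \<in> FindWS (dcomp ds, Wset As)"
          using R[unfolded realizer_def, rule_format, of h "(dcomp ds, Wset As)"] gh Fne by simp
        then obtain s where s: "profile_rep (G h) = Some s" "s \<in> FindWS (dcomp ds, Wset As)" by blast
        have sdef: "s = (\<lambda>w. G h (bl_code w) \<noteq> 0)" using s(1) by (simp add: profile_rep_def)
        have ex: "\<exists>s. winning (dcomp ds) (Wset As) P1 s" using wstar by blast
        have "s \<in> {s. winning (dcomp ds) (Wset As) P1 s \<or> winning (dcomp ds) (Wset As) P2 s}"
          using s(2) unfolding FindWS_iff if_P[OF ex] .
        then have "winning (dcomp ds) (Wset As) P1 s \<or> winning (dcomp ds) (Wset As) P2 s"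
          unfolding mem_Collect_eq .
        then have ws: "winning (dcomp ds) (Wset As) P1 s" using not_both[OF wstar] by blast
        let ?k = "\<lambda>m. bpair p (G h) (2 * (2 * ((E ^^ Suc (d1 m)) (2 * d2 m + 1)) + 1) + 1)"
        have k1: "t2_computes MK (bpair p (G h)) ?k" by (rule MK)
        define ys where "ys = (\<lambda>i w. s (False # replicate (Suc i) True @ False # w))"
        have bk: "bcomp ?k i (bl_code w) = G h (bl_code (False # replicate (Suc i) True @ False # w))" for i w
          unfolding bcomp_def bl_code_game E_def by (simp only: prod_encode_inverse fst_conv snd_conv bpair_odd)
        have sk: "seq_rep profile_rep ?k = Some ys"
          unfolding seq_rep_def profile_rep_def ys_def sdef using bk by simp
        have yin: "ys \<in> parallelization FindWS xs"
          unfolding parallelization_def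
        proof (intro CollectI allI)
          fix i
          have "winning (ds i) (As i) P1 (ys i)" unfolding ys_def by (rule extract_win[OF ws])
          then show "ys i \<in> FindWS (xs i)" unfolding xsi FindWS_iff by auto
        qed
        from k1 sk yin show "\<exists>k. t2_computes MK (bpair p (G h)) k \<and>
                      (\<exists>y. seq_rep profile_rep k = Some y \<and> y \<in> parallelization FindWS xs)" by blast
      qed
    qed
  qed
qed


theorem proposition20:
  fixes delta :: "(nat \<Rightarrow> bool) set rep"
  assumes "standing_assumptions delta"
    and "closed_under_comb delta"
  shows "weihrauch_eq (game_rep delta) profile_rep FindWS
           (seq_rep (game_rep delta)) (seq_rep profile_rep) (parallelization FindWS)"
  unfolding weihrauch_eq_def using easy_dir hard_dir[OF assms] by blast

end
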